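(* In the setting of the Dynamics on Stars lemma (IPD on $\mathbb{S}_d^n$, $d>15$, a star $G'$ with leaves $3,\dots,d-g_1$ initially $\mathrm{C}$ and leaves $d-g_1+1,\dots,d$ initially $\mathrm{D}$, other vertices arbitrary), take $g_0(d)=2$, $g_1(d)=3$, $g_2(d)=d/3-2$. If $M'=M'(d)$ satisfies $M'(d)/d^2\to\infty$, then for all sufficiently large $d$, $$\mathbb{P}[T_{g_2}\ge T_{g_0}\wedge M']\le \tfrac23.$$
   Context: IPD process: vertices carry actions in $\{\mathrm{C},\mathrm{D}\}$, each edge has an independent rate-1 Poisson clock, and when the clock of $(u,v)$ rings, $(\mathrm{C},\mathrm{C})\to(\mathrm{C},\mathrm{C})$, $(\mathrm{C},\mathrm{D})\to(\mathrm{D},\mathrm{D})$, $(\mathrm{D},\mathrm{C})\to(\mathrm{D},\mathrm{D})$, $(\mathrm{D},\mathrm{D})\to(\mathrm{C},\mathrm{C})$. $\mathbb{S}_d^n$ is a chain of $n$ stars with $d$ leaves each, consecutive stars sharing one leaf edge; in a star $G'$, $0$ is the root, leaves are $1,\dots,d$, and $1,2$ are the external vertices (leaves shared with neighbouring stars, or one arbitrary leaf for an extremal star). $N_{\mathrm{D}}$ is the number of $\mathrm{D}$'s among leaves $3,\dots,d$ of $G'$, and $T_g$ is the first time $N_{\mathrm{D}}=g$. $a\wedge b=\min\{a,b\}$. *)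

theory Defs
  imports "HOL-Probability.Probability"
begin

datatype act = Cp | Df

text \<open>Root j : root of star j (j < n);
  Link j : leaf shared by stars j-1 and j (j <= n); Link j is external leaf 1 of star j
           and Link (j+1) is external leaf 2 of star j (Link 0 and Link n are the
           extra external leaves of the extremal stars);
  Leaf j k : private leaf number k of star j, 3 <= k <= d.\<close>
datatype vtx = Root nat | Link nat | Leaf nat nat

definition star_leaves :: "nat \<Rightarrow> nat \<Rightarrow> vtx set" where
  "star_leaves d j = {Link j, Link (Suc j)} \<union> {Leaf j k | k. 3 \<le> k \<and> k \<le> d}"

definition chain_edges :: "nat \<Rightarrow> nat \<Rightarrow> (vtx \<times> vtx) set" where
  "chain_edges d n = {(Root j, v) | j v. j < n \<and> v \<in> star_leaves d j}"

definition ipd_update :: "(vtx \<Rightarrow> act) \<Rightarrow> vtx \<times> vtx \<Rightarrow> (vtx \<Rightarrow> act)" where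
  "ipd_update x e = (let a = (if x (fst e) = x (snd e) then Cp else Df)
                     in x(fst e := a, snd e := a))"

text \<open>Continuous-time IPD process with independent rate-1 Poisson clocks on the edges,
  realised through its jump chain: the sample space is an i.i.d. sequence of pairs
  (edge that rings, holding time), the edge being uniform on the edge set and the
  holding time exponential with rate |E|.\<close>
definition ipd_space :: "nat \<Rightarrow> nat \<Rightarrow> ((vtx \<times> vtx) \<times> real) stream measure" where
  "ipd_space d n = stream_space
     (measure_pmf (pmf_of_set (chain_edges d n)) \<Otimes>\<^sub>M
      density lborel (exponential_density (real (card (chain_edges d n)))))"

definition jump_time :: "((vtx \<times> vtx) \<times> real) stream \<Rightarrow> nat \<Rightarrow> real" where
  "jump_time \<omega> k = (\<Sum>i<k. snd (\<omega> !! i))"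

text \<open>Configuration right after the k-th ring (constant on [jump_time k, jump_time (k+1))).\<close>
primrec conf :: "(vtx \<Rightarrow> act) \<Rightarrow> ((vtx \<times> vtx) \<times> real) stream \<Rightarrow> nat \<Rightarrow> (vtx \<Rightarrow> act)" where
  "conf x0 \<omega> 0 = x0"
| "conf x0 \<omega> (Suc k) = ipd_update (conf x0 \<omega> k) (fst (\<omega> !! k))"

definition N_D :: "nat \<Rightarrow> nat \<Rightarrow> (vtx \<Rightarrow> act) \<Rightarrow> nat" where
  "N_D d j x = card {k. 3 \<le> k \<and> k \<le> d \<and> x (Leaf j k) = Df}"

text \<open>T_g: first time N_D = g (infinity if never).\<close>
definition hit_time :: "nat \<Rightarrow> nat \<Rightarrow> (vtx \<Rightarrow> act) \<Rightarrow> nat \<Rightarrow> ((vtx \<times> vtx) \<times> real) stream \<Rightarrow> ereal" where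
  "hit_time d j x0 g \<omega> = (INF k \<in> {k. N_D d j (conf x0 \<omega> k) = g}. ereal (jump_time \<omega> k))"

end

theory Submission
  imports Defs
begin


instance vtx :: countable by countable_datatype
instance act :: countable by countable_datatype

definition Dset :: "nat \<Rightarrow> nat \<Rightarrow> (vtx \<Rightarrow> act) \<Rightarrow> nat set" where
  "Dset d j x = {k. 3 \<le> k \<and> k \<le> d \<and> x (Leaf j k) = Df}"

definition Priv :: "nat \<Rightarrow> nat \<Rightarrow> (vtx \<times> vtx) set" where
  "Priv d j = (\<lambda>k. (Root j, Leaf j k)) ` {3..d}"

definition Lk :: "nat \<Rightarrow> (vtx \<times> vtx) set" where
  "Lk j = {(Root j, Link j), (Root j, Link (Suc j))}"

lemma N_D_Dset: "N_D d j x = card (Dset d j x)"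
  by (simp add: N_D_def Dset_def)

lemma Dset_sub: "Dset d j x \<subseteq> {3..d}"
  by (auto simp: Dset_def)

lemma Priv_sub: "j < n \<Longrightarrow> Priv d j \<subseteq> chain_edges d n"
  by (auto simp: Priv_def chain_edges_def star_leaves_def)

lemma Lk_sub: "j < n \<Longrightarrow> Lk j \<subseteq> chain_edges d n"
  by (auto simp: Lk_def chain_edges_def star_leaves_def)

lemma finite_E: "finite (chain_edges d n)"
proof -
  have "chain_edges d n \<subseteq> (\<Union>j<n. (\<lambda>v. (Root j, v)) ` star_leaves d j)"
    by (auto simp: chain_edges_def)
  moreover have "finite (star_leaves d j)" for j
  proof -
    have "{Leaf j k | k. 3 \<le> k \<and> k \<le> d} = Leaf j ` {3..d}" by auto
    then show ?thesis by (simp add: star_leaves_def)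
  qed
  ultimately show ?thesis by (meson finite_UN_I finite_imageI finite_lessThan finite_subset)
qed

lemma rest_edge:
  assumes "e \<in> chain_edges d n" "e \<notin> Priv d j" "e \<notin> Lk j"
  shows "ipd_update x e (Root j) = x (Root j)" "\<And>k. ipd_update x e (Leaf j k) = x (Leaf j k)"
proof -
  obtain i v where e: "e = (Root i, v)" "i < n" "v \<in> star_leaves d i"
    using assms(1) by (auto simp: chain_edges_def)
  have "i \<noteq> j" using assms e by (auto simp: Priv_def Lk_def star_leaves_def)
  then show "ipd_update x e (Root j) = x (Root j)" "\<And>k. ipd_update x e (Leaf j k) = x (Leaf j k)"
    using e by (auto simp: ipd_update_def Let_def star_leaves_def)
qed

lemma nonpriv_N:
  assumes "e \<in> chain_edges d n" "e \<notin> Priv d j"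
  shows "N_D d j (ipd_update x e) = N_D d j x"
proof -
  have "ipd_update x e (Leaf j k) = x (Leaf j k)" for k
  proof (cases "e \<in> Lk j")
    case True then show ?thesis by (auto simp: Lk_def ipd_update_def Let_def)
  next
    case False then show ?thesis using rest_edge assms by blast
  qed
  then show ?thesis by (simp add: N_D_def)
qed

lemma act_neq[simp]: "(a \<noteq> Df) = (a = Cp)" "(a \<noteq> Cp) = (a = Df)"
  by (cases a; simp)+

lemma priv_cases:
  assumes "3 \<le> k0" "k0 \<le> d"
  shows "x (Root j) = Cp \<Longrightarrow> k0 \<notin> Dset d j x \<Longrightarrow> Dset d j (ipd_update x (Root j, Leaf j k0)) = Dset d j x \<and> ipd_update x (Root j, Leaf j k0) (Root j) = Cp"
    and "x (Root j) = Cp \<Longrightarrow> k0 \<in> Dset d j x \<Longrightarrow> Dset d j (ipd_update x (Root j, Leaf j k0)) = Dset d j x \<and> ipd_update x (Root j, Leaf j k0) (Root j) = Df"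
    and "x (Root j) = Df \<Longrightarrow> k0 \<notin> Dset d j x \<Longrightarrow> Dset d j (ipd_update x (Root j, Leaf j k0)) = insert k0 (Dset d j x) \<and> ipd_update x (Root j, Leaf j k0) (Root j) = Df"
    and "x (Root j) = Df \<Longrightarrow> k0 \<in> Dset d j x \<Longrightarrow> Dset d j (ipd_update x (Root j, Leaf j k0)) = Dset d j x - {k0} \<and> ipd_update x (Root j, Leaf j k0) (Root j) = Cp"
  using assms by (auto simp: ipd_update_def Dset_def intro: act.exhaust)

lemma sum_split_E:
  assumes "j < n"
  shows "(\<Sum>e\<in>chain_edges d n. \<phi> (ipd_update x e)) =
     (\<Sum>k\<in>{3..d}. \<phi> (ipd_update x (Root j, Leaf j k))) + (\<Sum>e\<in>chain_edges d n - Priv d j. \<phi> (ipd_update x e))"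
proof -
  have "(\<Sum>e\<in>chain_edges d n. \<phi> (ipd_update x e)) = (\<Sum>e\<in>Priv d j. \<phi> (ipd_update x e)) + (\<Sum>e\<in>chain_edges d n - Priv d j. \<phi> (ipd_update x e))"
    using Priv_sub[OF assms] finite_E by (metis (no_types, lifting) add.commute sum.subset_diff)
  moreover have "(\<Sum>e\<in>Priv d j. \<phi> (ipd_update x e)) = (\<Sum>k\<in>{3..d}. \<phi> (ipd_update x (Root j, Leaf j k)))"
    unfolding Priv_def by (subst sum.reindex) (auto simp: inj_on_def)
  ultimately show ?thesis by simp
qed

lemma sum_Dset:
  fixes \<alpha> \<beta> :: real
  shows "(\<Sum>k\<in>{3..d}. if k \<in> Dset d j x then \<alpha> else \<beta>) = real (N_D d j x) * \<alpha> + (real (d - 2) - real (N_D d j x)) * \<beta>"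
proof -
  have f: "finite (Dset d j x)" using Dset_sub by (meson finite_atLeastAtMost finite_subset)
  have i1: "{3..d} \<inter> {k. k \<in> Dset d j x} = Dset d j x" using Dset_sub by auto
  have i2: "{3..d} \<inter> - {k. k \<in> Dset d j x} = {3..d} - Dset d j x" by auto
  have c: "card ({3..d} - Dset d j x) = card {3..d} - card (Dset d j x)"
    using Dset_sub by (simp add: card_Diff_subset f)
  have c2: "card (Dset d j x) \<le> card {3..d::nat}" by (rule card_mono[OF _ Dset_sub]) simp
  have c3: "card ({3..d} - Dset d j x) + card (Dset d j x) = d - 2" using c c2 by simp
  then have "real (card ({3..d} - Dset d j x)) + real (card (Dset d j x)) = real (d - 2)"
    by (metis of_nat_add)
  then have c4: "real (card ({3..d} - Dset d j x)) = real (d - 2) - real (N_D d j x)"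
    by (simp add: N_D_Dset)
  show ?thesis
    apply (subst sum.If_cases, simp)
    apply (simp only: i1 i2)
    using c4 by (simp add: N_D_Dset)
qed

definition hh :: "nat \<Rightarrow> real" where "hh m = 1 - 4 * (1/2) ^ m"

definition rt :: "nat \<Rightarrow> (vtx \<Rightarrow> act) \<Rightarrow> real" where
  "rt j x = (if x (Root j) = Cp then 1/3 else 0)"

definition UU :: "nat \<Rightarrow> nat \<Rightarrow> nat \<Rightarrow> (vtx \<Rightarrow> act) \<Rightarrow> real" where
  "UU d j G x = real G - real (N_D d j x) + rt j x"

lemma finite_Dset: "finite (Dset d j x)"
  using Dset_sub by (meson finite_atLeastAtMost finite_subset)

lemma priv_N:
  assumes "3 \<le> k" "k \<le> d"
  shows "x (Root j) = Cp \<Longrightarrow> N_D d j (ipd_update x (Root j, Leaf j k)) = N_D d j x"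
    and "x (Root j) = Cp \<Longrightarrow> k \<in> Dset d j x \<Longrightarrow> rt j (ipd_update x (Root j, Leaf j k)) = 0"
    and "x (Root j) = Cp \<Longrightarrow> k \<notin> Dset d j x \<Longrightarrow> rt j (ipd_update x (Root j, Leaf j k)) = 1/3"
    and "x (Root j) = Df \<Longrightarrow> k \<notin> Dset d j x \<Longrightarrow> N_D d j (ipd_update x (Root j, Leaf j k)) = Suc (N_D d j x) \<and> rt j (ipd_update x (Root j, Leaf j k)) = 0"
    and "x (Root j) = Df \<Longrightarrow> k \<in> Dset d j x \<Longrightarrow> N_D d j (ipd_update x (Root j, Leaf j k)) = N_D d j x - 1 \<and> rt j (ipd_update x (Root j, Leaf j k)) = 1/3"
proof -
  note pc = priv_cases[OF assms, of x j]
  show "x (Root j) = Cp \<Longrightarrow> N_D d j (ipd_update x (Root j, Leaf j k)) = N_D d j x"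
    using pc(1,2) by (cases "k \<in> Dset d j x") (auto simp: N_D_Dset)
  show "x (Root j) = Cp \<Longrightarrow> k \<in> Dset d j x \<Longrightarrow> rt j (ipd_update x (Root j, Leaf j k)) = 0"
    using pc(2) by (simp add: rt_def)
  show "x (Root j) = Cp \<Longrightarrow> k \<notin> Dset d j x \<Longrightarrow> rt j (ipd_update x (Root j, Leaf j k)) = 1/3"
    using pc(1) by (simp add: rt_def)
  show "x (Root j) = Df \<Longrightarrow> k \<notin> Dset d j x \<Longrightarrow> N_D d j (ipd_update x (Root j, Leaf j k)) = Suc (N_D d j x) \<and> rt j (ipd_update x (Root j, Leaf j k)) = 0"
    using pc(3) finite_Dset by (simp add: rt_def N_D_Dset)
  show "x (Root j) = Df \<Longrightarrow> k \<in> Dset d j x \<Longrightarrow> N_D d j (ipd_update x (Root j, Leaf j k)) = N_D d j x - 1 \<and> rt j (ipd_update x (Root j, Leaf j k)) = 1/3"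
    using pc(4) finite_Dset by (simp add: rt_def N_D_Dset)
qed

lemma drift_h:
  assumes "j < n" "3 \<le> N_D d j x" "3 * N_D d j x + 2 \<le> d"
  shows "(\<Sum>e\<in>chain_edges d n. hh (N_D d j (ipd_update x e)) - hh (N_D d j x)) \<ge> 0"
proof -
  define m where "m = N_D d j x"
  have rest: "(\<Sum>e\<in>chain_edges d n - Priv d j. hh (N_D d j (ipd_update x e)) - hh m) = 0"
    by (rule sum.neutral) (auto simp: nonpriv_N m_def)
  have priv: "(\<Sum>k\<in>{3..d}. hh (N_D d j (ipd_update x (Root j, Leaf j k))) - hh m) \<ge> 0"
  proof (cases "x (Root j) = Cp")
    case True
    then show ?thesis by (simp add: priv_N(1) m_def)
  next
    case False
    then have D: "x (Root j) = Df" by simp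
    have "(\<Sum>k\<in>{3..d}. hh (N_D d j (ipd_update x (Root j, Leaf j k))) - hh m)
        = (\<Sum>k\<in>{3..d}. if k \<in> Dset d j x then hh (m - 1) - hh m else hh (Suc m) - hh m)"
      using D by (intro sum.cong) (auto simp: priv_N(4,5) m_def)
    also have "\<dots> = real m * (hh (m - 1) - hh m) + (real (d - 2) - real m) * (hh (Suc m) - hh m)"
      by (simp add: sum_Dset m_def)
    also have "\<dots> \<ge> 0"
    proof -
      obtain p where p: "m = Suc p" using assms(2) m_def by (metis Suc_le_D le_trans numeral_3_eq_3 Suc_le_lessD le_refl less_imp_le_nat)
      have e1: "hh (m - 1) - hh m = - 4 * (1/2) ^ m" using p by (simp add: hh_def)
      have e2: "hh (Suc m) - hh m = 2 * (1/2) ^ m" by (simp add: hh_def)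
      have "real (d - 2) \<ge> 3 * real m" using assms(3) m_def by linarith
      then have "real m * (- 4) + (real (d - 2) - real m) * 2 \<ge> 0" by (simp add: algebra_simps)
      then have "(1/2::real) ^ m * (real m * (- 4) + (real (d - 2) - real m) * 2) \<ge> 0" by simp
      then show ?thesis unfolding e1 e2 by (simp add: algebra_simps)
    qed
    finally show ?thesis .
  qed
  show ?thesis
    using sum_split_E[OF assms(1), of "\<lambda>y. hh (N_D d j y) - hh m"] rest priv m_def by simp
qed

lemma drift_U:
  assumes "j < n" "3 \<le> N_D d j x" "7 * N_D d j x + 11 \<le> 3 * d"
  shows "(\<Sum>e\<in>chain_edges d n. UU d j G (ipd_update x e) - UU d j G x) \<le> -1"
proof -
  define m where "m = N_D d j x"
  let ?E = "chain_edges d n"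
  have rest: "(\<Sum>e\<in>?E - Priv d j. UU d j G (ipd_update x e) - UU d j G x) \<le> 2 * (1/3 - rt j x)"
  proof -
    have "(\<Sum>e\<in>?E - Priv d j. UU d j G (ipd_update x e) - UU d j G x)
       \<le> (\<Sum>e\<in>?E - Priv d j. if e \<in> Lk j then 1/3 - rt j x else 0)"
    proof (rule sum_mono)
      fix e assume e: "e \<in> ?E - Priv d j"
      then have "UU d j G (ipd_update x e) - UU d j G x = rt j (ipd_update x e) - rt j x"
        using nonpriv_N[of e d n j x] by (simp add: UU_def)
      moreover have "e \<notin> Lk j \<Longrightarrow> rt j (ipd_update x e) = rt j x"
        using rest_edge(1)[of e d n j x] e by (simp add: rt_def)
      moreover have "rt j (ipd_update x e) \<le> 1/3" by (simp add: rt_def)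
      ultimately show "UU d j G (ipd_update x e) - UU d j G x \<le> (if e \<in> Lk j then 1/3 - rt j x else 0)"
        by auto
    qed
    also have "\<dots> = real (card ((?E - Priv d j) \<inter> Lk j)) * (1/3 - rt j x)"
      using finite_E by (simp add: sum.If_cases)
    also have "\<dots> \<le> 2 * (1/3 - rt j x)"
    proof -
      have "card ((?E - Priv d j) \<inter> Lk j) \<le> card (Lk j)" by (rule card_mono) (auto simp: Lk_def)
      also have "\<dots> \<le> 2" by (simp add: Lk_def card_insert_le_m1)
      finally have "real (card ((?E - Priv d j) \<inter> Lk j)) \<le> 2" by simp
      moreover have "1/3 - rt j x \<ge> 0" by (simp add: rt_def)
      ultimately show ?thesis by (metis mult_right_mono)
    qed
    finally show ?thesis .
  qed
  have priv: "(\<Sum>k\<in>{3..d}. UU d j G (ipd_update x (Root j, Leaf j k)) - UU d j G x) \<le> - 1 - 2 * (1/3 - rt j x)"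
  proof (cases "x (Root j) = Cp")
    case True
    have "(\<Sum>k\<in>{3..d}. UU d j G (ipd_update x (Root j, Leaf j k)) - UU d j G x)
        = (\<Sum>k\<in>{3..d}. if k \<in> Dset d j x then - 1/3 else 0)"
    proof (rule sum.cong)
      fix k assume k: "k \<in> {3..d}"
      have r: "rt j x = 1/3" using True by (simp add: rt_def)
      show "UU d j G (ipd_update x (Root j, Leaf j k)) - UU d j G x = (if k \<in> Dset d j x then - 1/3 else 0)"
        using k priv_N(1,2,3)[of k d x j] True r by (auto simp: UU_def)
    qed simp
    also have "\<dots> = real m * (-1/3)" by (simp add: sum_Dset m_def)
    finally show ?thesis using assms(2) True m_def by (simp add: rt_def)
  next
    case False
    then have D: "x (Root j) = Df" by simp
    have "(\<Sum>k\<in>{3..d}. UU d j G (ipd_update x (Root j, Leaf j k)) - UU d j G x)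
        = (\<Sum>k\<in>{3..d}. if k \<in> Dset d j x then 4/3 else -1)"
    proof (rule sum.cong)
      fix k assume k: "k \<in> {3..d}"
      show "UU d j G (ipd_update x (Root j, Leaf j k)) - UU d j G x = (if k \<in> Dset d j x then 4/3 else -1)"
      proof (cases "k \<in> Dset d j x")
        case True
        then have "N_D d j x \<ge> 1" using finite_Dset by (auto simp: N_D_Dset card_gt_0_iff Suc_le_eq)
        then show ?thesis using priv_N(5)[OF _ _ D True] k True D by (auto simp: UU_def rt_def of_nat_diff)
      next
        case False
        then show ?thesis using priv_N(4)[OF _ _ D False] k D by (auto simp: UU_def rt_def)
      qed
    qed simp
    also have "\<dots> = real m * (4/3) + (real (d - 2) - real m) * (-1)" by (simp add: sum_Dset m_def)
    also have "\<dots> \<le> - 1 - 2 * (1/3 - rt j x)"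
    proof -
      have "real (d - 2) = real d - 2" using assms m_def by (simp add: of_nat_diff)
      moreover have "7 * real m + 11 \<le> 3 * real d" using assms(3) m_def by linarith
      ultimately show ?thesis using D by (simp add: rt_def)
    qed
    finally show ?thesis .
  qed
  show ?thesis
    using sum_split_E[OF assms(1), of "\<lambda>y. UU d j G y - UU d j G x"] rest priv by simp
qed



definition BM :: "nat \<Rightarrow> nat \<Rightarrow> ((vtx \<times> vtx) \<times> real) measure" where
  "BM d n = measure_pmf (pmf_of_set (chain_edges d n)) \<Otimes>\<^sub>M
      density lborel (exponential_density (real (card (chain_edges d n))))"

lemma ipd_space_BM: "ipd_space d n = stream_space (BM d n)"
  by (simp add: ipd_space_def BM_def)

lemma E_ne: "j < n \<Longrightarrow> chain_edges d n \<noteq> {}"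
  using Lk_sub[of j n d] by (auto simp: Lk_def)

lemma card_E_pos: "j < n \<Longrightarrow> 0 < card (chain_edges d n)"
  using E_ne finite_E by (simp add: card_gt_0_iff)

lemma prob_BM: "j < n \<Longrightarrow> prob_space (BM d n)"
  unfolding BM_def
  by (intro prob_space_pair prob_space_measure_pmf prob_space_exponential_density)
     (use card_E_pos in auto)

lemma space_BM: "space (BM d n) = UNIV"
  by (simp add: BM_def space_pair_measure)

lemma space_S: "space (stream_space (BM d n)) = UNIV"
  by (simp add: space_stream_space space_BM)

lemma meas_fst_shd: "(\<lambda>\<omega>. fst (shd \<omega>)) \<in> measurable (stream_space (BM d n)) (count_space UNIV)"
proof -
  have "fst \<in> measurable (BM d n) (count_space UNIV)"
    unfolding BM_def by (rule measurable_compose[OF measurable_fst]) simp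
  then show ?thesis using measurable_shd by (rule measurable_compose[rotated])
qed

fun succ :: "nat \<Rightarrow> nat \<Rightarrow> nat \<Rightarrow> nat \<Rightarrow> (vtx \<Rightarrow> act) \<Rightarrow> ((vtx \<times> vtx) \<times> real) stream \<Rightarrow> bool" where
  "succ d j G 0 x \<omega> = (N_D d j x = G)"
| "succ d j G (Suc k) x \<omega> = (N_D d j x = G \<or> (N_D d j x \<noteq> 2 \<and> succ d j G k (ipd_update x (fst (shd \<omega>))) (stl \<omega>)))"

lemma meas_succ: "Measurable.pred (stream_space (BM d n)) (succ d j G k x)"
proof (induction k arbitrary: x)
  case 0
  then show ?case by simp
next
  case (Suc k)
  have "(\<lambda>\<omega>. (\<lambda>e \<omega>. succ d j G k (ipd_update x e) (stl \<omega>)) (fst (shd \<omega>)) \<omega>) \<in> measurable (stream_space (BM d n)) (count_space UNIV)"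
    by (rule measurable_compose_countable'[OF _ meas_fst_shd])
       (auto intro: measurable_compose[OF measurable_stl Suc.IH])
  then have [measurable]: "Measurable.pred (stream_space (BM d n)) (\<lambda>\<omega>. succ d j G k (ipd_update x (fst (shd \<omega>))) (stl \<omega>))"
    by simp
  show ?case by simp
qed

lemma succ_set: "{\<omega> \<in> space (stream_space (BM d n)). succ d j G k x \<omega>} \<in> sets (stream_space (BM d n))"
  using meas_succ by measurable

lemma emeasure_succ_step:
  assumes "j < n" "N_D d j x \<noteq> G" "N_D d j x \<noteq> 2"
  shows "emeasure (stream_space (BM d n)) {\<omega> \<in> space (stream_space (BM d n)). succ d j G (Suc k) x \<omega>}
    = (\<Sum>e\<in>chain_edges d n. emeasure (stream_space (BM d n)) {\<omega> \<in> space (stream_space (BM d n)). succ d j G k (ipd_update x e) \<omega>}) / card (chain_edges d n)"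
proof -
  interpret P: prob_space "BM d n" using prob_BM[OF assms(1)] .
  let ?S = "stream_space (BM d n)"
  define g where "g e = emeasure ?S {\<omega> \<in> space ?S. succ d j G k (ipd_update x e) \<omega>}" for e
  have "emeasure ?S {\<omega> \<in> space ?S. succ d j G (Suc k) x \<omega>}
      = (\<integral>\<^sup>+t. emeasure ?S {\<omega>\<in>space ?S. t ## \<omega> \<in> {\<omega> \<in> space ?S. succ d j G (Suc k) x \<omega>}} \<partial>BM d n)"
    by (rule P.emeasure_stream_space[OF succ_set])
  also have "\<dots> = (\<integral>\<^sup>+t. g (fst t) \<partial>BM d n)"
    using assms by (simp add: g_def space_S)
  also have "\<dots> = (\<integral>\<^sup>+e. g e \<partial>measure_pmf (pmf_of_set (chain_edges d n)))"
  proof -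
    interpret D: prob_space "density lborel (exponential_density (real (card (chain_edges d n))))"
      using card_E_pos[OF assms(1)] by (intro prob_space_exponential_density) auto
    have m: "(\<lambda>t. g (fst t)) \<in> borel_measurable (BM d n)"
      unfolding BM_def by (rule measurable_compose[OF measurable_fst]) simp
    have one: "emeasure (density lborel (exponential_density (real (card (chain_edges d n))))) UNIV = 1"
      using D.emeasure_space_1 by simp
    show ?thesis
      unfolding BM_def
      using D.nn_integral_fst[OF m[unfolded BM_def]]
      by (simp add: one)
  qed
  also have "\<dots> = (\<Sum>e\<in>chain_edges d n. g e) / card (chain_edges d n)"
    by (rule nn_integral_pmf_of_set[OF E_ne[OF assms(1)] finite_E])
  finally show ?thesis by (simp add: g_def)
qed



definition FF :: "nat \<Rightarrow> nat \<Rightarrow> nat \<Rightarrow> real \<Rightarrow> nat \<Rightarrow> (vtx \<Rightarrow> act) \<Rightarrow> real" where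
  "FF d j G c k x = max 0 (hh (N_D d j x) - c * UU d j G x / real (Suc k))"

lemma hh_le1: "hh m \<le> 1" by (simp add: hh_def)

lemma hh_le0: "m \<le> 2 \<Longrightarrow> hh m \<le> 0"
proof -
  assume "m \<le> 2"
  then have "m = 0 \<or> m = 1 \<or> m = 2" by auto
  then show ?thesis by (auto simp: hh_def power2_eq_square)
qed

lemma hh3: "hh 3 = 1/2" by (simp add: hh_def eval_nat_numeral)

lemma UU_ge: "N_D d j x \<le> G \<Longrightarrow> UU d j G x \<ge> real G - real (N_D d j x)"
  by (simp add: UU_def rt_def)

lemma N_upd_le:
  assumes "e \<in> chain_edges d n"
  shows "N_D d j (ipd_update x e) \<le> Suc (N_D d j x)"
proof (cases "e \<in> Priv d j")
  case False then show ?thesis using nonpriv_N[OF assms False] by simp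
next
  case True
  then obtain k where k: "3 \<le> k" "k \<le> d" "e = (Root j, Leaf j k)" by (auto simp: Priv_def)
  show ?thesis
  proof (cases "x (Root j)")
    case Cp then show ?thesis using priv_N(1)[OF k(1,2), of x j] k(3) by simp
  next
    case Df then show ?thesis using priv_N(4,5)[OF k(1,2), of x j] k(3)
      by (cases "k \<in> Dset d j x") auto
  qed
qed

lemma step_real:
  fixes h W SH SU SF c kk :: real
  assumes c: "c > 0" and h1: "h \<le> 1" and SF: "SF \<ge> SH - c * SU / kk" and kk: "kk > 0"
    and SH: "SH \<ge> c * h" and SU: "SU \<le> W - 1" and SF0: "SF \<ge> 0"
  shows "max 0 (h - W / (kk + 1)) \<le> SF / c"
proof (cases "h - W / (kk + 1) \<le> 0")
  case True
  then show ?thesis using SF0 c by simp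
next
  case False
  have "SF / c \<ge> (SH - c * SU / kk) / c" using SF c by (simp add: divide_right_mono)
  also have "(SH - c * SU / kk) / c = SH / c - SU / kk" using c by (simp add: field_simps)
  finally have *: "SF / c \<ge> SH / c - SU / kk" .
  have "SH / c \<ge> h" using SH c by (simp add: field_simps)
  moreover have "SU / kk \<le> (W - 1) / kk" using SU kk by (simp add: divide_right_mono)
  ultimately have **: "SF / c \<ge> h - (W - 1) / kk" using * by linarith
  have "W / (kk + 1) < h" using False by simp
  then have "W < h * (kk + 1)" using kk by (simp add: field_simps)
  also have "\<dots> \<le> kk + 1" using h1 kk by (simp add: mult_left_le_one_le)
  finally have "W < kk + 1" .
  then have "(W - 1) / kk \<le> W / (kk + 1)" using kk by (simp add: field_simps)
  then show ?thesis using ** False by simp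
qed

lemma DP:
  assumes jn: "j < n" and dG: "3 * G + 3 \<le> d"
  shows "N_D d j x \<le> G \<Longrightarrow> ennreal (FF d j G (real (card (chain_edges d n))) k x)
     \<le> emeasure (stream_space (BM d n)) {\<omega> \<in> space (stream_space (BM d n)). succ d j G k x \<omega>}"
proof (induction k arbitrary: x)
  let ?c = "real (card (chain_edges d n))"
  let ?S = "stream_space (BM d n)"
  interpret S: prob_space ?S using prob_BM[OF jn] by (rule prob_space.prob_space_stream_space)
  have c1: "?c \<ge> 1" using card_E_pos[OF jn, of d] by (simp add: Suc_le_eq)
  {
    fix k x assume NG: "N_D d j x = G"
    have "{\<omega> \<in> space ?S. succ d j G k x \<omega>} = space ?S" using NG by (cases k) auto
    moreover have "FF d j G ?c k x \<le> 1"
    proof -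
      have q: "0 \<le> ?c * UU d j G x / real (Suc k)" using UU_ge[of d j x G] NG
        by (intro divide_nonneg_nonneg mult_nonneg_nonneg) auto
      show ?thesis unfolding FF_def using hh_le1[of "N_D d j x"] q by linarith
    qed
    ultimately have "ennreal (FF d j G ?c k x) \<le> emeasure ?S {\<omega> \<in> space ?S. succ d j G k x \<omega>}"
      by (simp add: S.emeasure_space_1)
  } note caseG = this
  {
    fix k x assume N2: "N_D d j x \<le> 2" "N_D d j x \<le> G"
    have q: "0 \<le> ?c * UU d j G x / real (Suc k)" using UU_ge[OF N2(2)] N2(2)
      by (intro divide_nonneg_nonneg mult_nonneg_nonneg) auto
    have "FF d j G ?c k x = 0"
      unfolding FF_def using hh_le0[OF N2(1)] q by linarith
    then have "ennreal (FF d j G ?c k x) \<le> emeasure ?S {\<omega> \<in> space ?S. succ d j G k x \<omega>}" by simp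
  } note case2 = this
  {
    case 0
    show ?case
    proof (cases "N_D d j x = G \<or> N_D d j x \<le> 2")
      case True then show ?thesis using caseG case2 0 by blast
    next
      case False
      then have "UU d j G x \<ge> 1" using UU_ge[OF 0] 0 by linarith
      then have "?c * UU d j G x \<ge> 1 * 1" using c1 by (intro mult_mono) auto
      then have "FF d j G ?c 0 x = 0" unfolding FF_def using hh_le1[of "N_D d j x"] by simp
      then show ?thesis by simp
    qed
  }
  {
    case (Suc k)
    show ?case
    proof (cases "N_D d j x = G \<or> N_D d j x \<le> 2")
      case True then show ?thesis using caseG case2 Suc by blast
    next
      case False
      define m where "m = N_D d j x"
      have m3: "3 \<le> m" "m < G" using False Suc.prems m_def by auto
      have next_le: "N_D d j (ipd_update x e) \<le> G" if "e \<in> chain_edges d n" for e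
        using N_upd_le[OF that, of j x] m3 m_def by linarith
      have "(\<Sum>e\<in>chain_edges d n. ennreal (FF d j G ?c k (ipd_update x e)))
          \<le> (\<Sum>e\<in>chain_edges d n. emeasure ?S {\<omega> \<in> space ?S. succ d j G k (ipd_update x e) \<omega>})"
        by (rule sum_mono) (rule Suc.IH[OF next_le])
      then have A: "ennreal (\<Sum>e\<in>chain_edges d n. FF d j G ?c k (ipd_update x e)) / card (chain_edges d n)
          \<le> emeasure ?S {\<omega> \<in> space ?S. succ d j G (Suc k) x \<omega>}"
      proof -
        have e1: "emeasure ?S {\<omega> \<in> space ?S. succ d j G (Suc k) x \<omega>} = (\<Sum>e\<in>chain_edges d n. emeasure ?S {\<omega> \<in> space ?S. succ d j G k (ipd_update x e) \<omega>}) / card (chain_edges d n)"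
          by (rule emeasure_succ_step[OF jn]) (use False in auto)
        have e2: "ennreal (\<Sum>e\<in>chain_edges d n. FF d j G ?c k (ipd_update x e)) = (\<Sum>e\<in>chain_edges d n. ennreal (FF d j G ?c k (ipd_update x e)))"
          by (rule sum_ennreal[symmetric]) (simp add: FF_def)
        show ?thesis unfolding e1 e2 using \<open>(\<Sum>e\<in>_. _) \<le> _\<close> by (rule divide_right_mono_ennreal)
      qed
      have dh: "(\<Sum>e\<in>chain_edges d n. hh (N_D d j (ipd_update x e)) - hh m) \<ge> 0"
        using drift_h[OF jn, of d x] m3 dG m_def by simp
      have dU: "(\<Sum>e\<in>chain_edges d n. UU d j G (ipd_update x e) - UU d j G x) \<le> -1"
        using drift_U[OF jn, of d x G] m3 dG m_def by simp
      have SH: "(\<Sum>e\<in>chain_edges d n. hh (N_D d j (ipd_update x e))) \<ge> ?c * hh m"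
        using dh by (simp add: sum_subtractf)
      have SU: "(\<Sum>e\<in>chain_edges d n. UU d j G (ipd_update x e)) \<le> ?c * UU d j G x - 1"
        using dU by (simp add: sum_subtractf)
      have SF: "(\<Sum>e\<in>chain_edges d n. FF d j G ?c k (ipd_update x e))
          \<ge> (\<Sum>e\<in>chain_edges d n. hh (N_D d j (ipd_update x e))) - ?c * (\<Sum>e\<in>chain_edges d n. UU d j G (ipd_update x e)) / real (Suc k)"
      proof -
        have "(\<Sum>e\<in>chain_edges d n. hh (N_D d j (ipd_update x e)) - ?c * UU d j G (ipd_update x e) / real (Suc k))
            \<le> (\<Sum>e\<in>chain_edges d n. FF d j G ?c k (ipd_update x e))"
          by (rule sum_mono) (simp add: FF_def)
        moreover have "(\<Sum>e\<in>chain_edges d n. hh (N_D d j (ipd_update x e)) - ?c * UU d j G (ipd_update x e) / real (Suc k))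
            = (\<Sum>e\<in>chain_edges d n. hh (N_D d j (ipd_update x e))) - ?c * (\<Sum>e\<in>chain_edges d n. UU d j G (ipd_update x e)) / real (Suc k)"
          by (simp add: sum_subtractf sum_divide_distrib[symmetric] sum_distrib_left)
        ultimately show ?thesis by simp
      qed
      have SF0: "(\<Sum>e\<in>chain_edges d n. FF d j G ?c k (ipd_update x e)) \<ge> 0"
        by (rule sum_nonneg) (simp add: FF_def)
      have key: "FF d j G ?c (Suc k) x \<le> (\<Sum>e\<in>chain_edges d n. FF d j G ?c k (ipd_update x e)) / ?c"
        unfolding FF_def[of d j G ?c "Suc k"] m_def[symmetric]
        using step_real[OF _ hh_le1 SF _ SH SU SF0] c1
        by (simp add: add.commute)
      have "ennreal (FF d j G ?c (Suc k) x) \<le> ennreal ((\<Sum>e\<in>chain_edges d n. FF d j G ?c k (ipd_update x e)) / ?c)"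
        using key by (rule ennreal_leI)
      also have "\<dots> = ennreal (\<Sum>e\<in>chain_edges d n. FF d j G ?c k (ipd_update x e)) / card (chain_edges d n)"
        using c1 SF0 by (simp add: divide_ennreal ennreal_of_nat_eq_real_of_nat)
      finally show ?thesis using A by (rule order.trans)
    qed
  }
qed



lemma conf_shift: "conf x \<omega> (Suc i) = conf (ipd_update x (fst (shd \<omega>))) (stl \<omega>) i"
  by (induction i) auto

lemma succ_conf:
  assumes "G \<noteq> 2"
  shows "succ d j G k x \<omega> \<Longrightarrow> \<exists>i\<le>k. N_D d j (conf x \<omega> i) = G \<and> (\<forall>l\<le>i. N_D d j (conf x \<omega> l) \<noteq> 2)"
proof (induction k arbitrary: x \<omega>)
  case 0
  then show ?case using assms by auto
next
  case (Suc k)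
  show ?case
  proof (cases "N_D d j x = G")
    case True then show ?thesis using assms by (intro exI[of _ 0]) auto
  next
    case False
    then have N2: "N_D d j x \<noteq> 2" and s: "succ d j G k (ipd_update x (fst (shd \<omega>))) (stl \<omega>)"
      using Suc.prems by auto
    obtain i where i: "i \<le> k" "N_D d j (conf (ipd_update x (fst (shd \<omega>))) (stl \<omega>) i) = G"
      "\<forall>l\<le>i. N_D d j (conf (ipd_update x (fst (shd \<omega>))) (stl \<omega>) l) \<noteq> 2"
      using Suc.IH[OF s] by blast
    have "\<forall>l\<le>Suc i. N_D d j (conf x \<omega> l) \<noteq> 2"
    proof (intro allI impI)
      fix l assume "l \<le> Suc i"
      then show "N_D d j (conf x \<omega> l) \<noteq> 2"
        using N2 i(3) by (cases l) (auto simp: conf_shift simp del: conf.simps(2))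
    qed
    then show ?thesis using i by (intro exI[of _ "Suc i"]) (auto simp: conf_shift simp del: conf.simps(2))
  qed
qed

lemma jump_time_mono:
  assumes "\<forall>i. 0 < snd (\<omega> !! i)" "l \<le> l'"
  shows "jump_time \<omega> l \<le> jump_time \<omega> l'"
  unfolding jump_time_def using assms by (intro sum_mono2) (auto simp: less_imp_le)

lemma not_bad:
  assumes pos: "\<forall>i. 0 < snd (\<omega> !! i)" and iK: "i \<le> K" and NG: "N_D d j (conf x \<omega> i) = G"
    and N2: "\<forall>l\<le>i. N_D d j (conf x \<omega> l) \<noteq> 2" and T: "jump_time \<omega> K < M"
  shows "\<not> (hit_time d j x G \<omega> \<ge> min (hit_time d j x 2 \<omega>) (ereal M))"
proof -
  have h1: "hit_time d j x G \<omega> \<le> ereal (jump_time \<omega> i)"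
    unfolding hit_time_def using NG by (intro INF_lower) auto
  have h2: "hit_time d j x 2 \<omega> \<ge> ereal (jump_time \<omega> (Suc i))"
    unfolding hit_time_def
  proof (rule INF_greatest)
    fix l assume "l \<in> {k. N_D d j (conf x \<omega> k) = 2}"
    then have "Suc i \<le> l" using N2 by (metis mem_Collect_eq not_less_eq_eq)
    then show "ereal (jump_time \<omega> (Suc i)) \<le> ereal (jump_time \<omega> l)"
      using jump_time_mono[OF pos] by simp
  qed
  have "jump_time \<omega> i < jump_time \<omega> (Suc i)"
    using pos by (simp add: jump_time_def)
  moreover have "jump_time \<omega> i < M"
    using jump_time_mono[OF pos iK] T by linarith
  ultimately have "ereal (jump_time \<omega> i) < min (hit_time d j x 2 \<omega>) (ereal M)"
    using h2 by (auto intro: less_le_trans[of _ "ereal (jump_time \<omega> (Suc i))"])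
  then show ?thesis using h1 by (meson leD le_less_trans)
qed

lemma AE_pos:
  assumes jn: "j < n"
  shows "AE \<omega> in stream_space (BM d n). \<forall>i. 0 < snd (\<omega> !! i)"
proof -
  interpret P: prob_space "BM d n" using prob_BM[OF jn] .
  let ?c = "real (card (chain_edges d n))"
  let ?M1 = "measure_pmf (pmf_of_set (chain_edges d n))"
  let ?M2 = "density lborel (exponential_density ?c)"
  interpret D: prob_space ?M2
    using card_E_pos[OF jn] by (intro prob_space_exponential_density) auto
  interpret PP: pair_sigma_finite ?M1 ?M2 by unfold_locales
  have "AE y in ?M2. 0 < y"
  proof (subst AE_density)
    show "AE y in lborel. 0 < ennreal (exponential_density ?c y) \<longrightarrow> 0 < y"
      using AE_lborel_singleton[of "0::real"]
      by eventually_elim (auto simp: exponential_density_def)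
  qed simp
  moreover have "{t \<in> space (?M1 \<Otimes>\<^sub>M ?M2). 0 < snd t} \<in> sets (?M1 \<Otimes>\<^sub>M ?M2)"
    by measurable
  ultimately have "AE t in ?M1 \<Otimes>\<^sub>M ?M2. 0 < snd t"
    by (intro PP.AE_pair_measure) auto
  then have "AE t in BM d n. 0 < snd t" unfolding BM_def by blast
  moreover have "Measurable.pred (BM d n) (\<lambda>t. 0 < snd t)" unfolding BM_def by measurable
  ultimately have "AE \<omega> in stream_space (BM d n). stream_all (\<lambda>t. 0 < snd t) \<omega>"
    by (intro P.AE_stream_all) auto
  then show ?thesis unfolding stream_all_def by blast
qed



lemma snd_meas_BM[measurable]: "snd \<in> borel_measurable (BM d n)"
  unfolding BM_def by measurable

lemma nn_snth:
  assumes jn: "j < n" and f[measurable]: "f \<in> borel_measurable (BM d n)"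
  shows "(\<integral>\<^sup>+\<omega>. f (\<omega> !! i) \<partial>stream_space (BM d n)) = (\<integral>\<^sup>+t. f t \<partial>BM d n)"
proof (induction i)
  interpret P: prob_space "BM d n" using prob_BM[OF jn] .
  interpret S: prob_space "stream_space (BM d n)" by (rule P.prob_space_stream_space)
  {
    case 0
    have "(\<integral>\<^sup>+\<omega>. f (\<omega> !! 0) \<partial>stream_space (BM d n)) = (\<integral>\<^sup>+t. (\<integral>\<^sup>+X. f ((t ## X) !! 0) \<partial>stream_space (BM d n)) \<partial>BM d n)"
      by (rule P.nn_integral_stream_space) measurable
    also have "\<dots> = (\<integral>\<^sup>+t. f t \<partial>BM d n)"
      by (simp add: S.emeasure_space_1)
    finally show ?case .
  next
    case (Suc i)
    have "(\<integral>\<^sup>+\<omega>. f (\<omega> !! Suc i) \<partial>stream_space (BM d n)) = (\<integral>\<^sup>+t. (\<integral>\<^sup>+X. f ((t ## X) !! Suc i) \<partial>stream_space (BM d n)) \<partial>BM d n)"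
      by (rule P.nn_integral_stream_space) measurable
    also have "\<dots> = (\<integral>\<^sup>+t. (\<integral>\<^sup>+t. f t \<partial>BM d n) \<partial>BM d n)"
      using Suc by simp
    also have "\<dots> = (\<integral>\<^sup>+t. f t \<partial>BM d n)"
      by (simp add: P.emeasure_space_1)
    finally show ?case .
  }
qed

lemma exp_mean:
  assumes jn: "j < n"
  shows "(\<integral>\<^sup>+t. ennreal (max 0 (snd t)) \<partial>BM d n) = ennreal (1 / real (card (chain_edges d n)))"
proof -
  let ?c = "real (card (chain_edges d n))"
  let ?M1 = "measure_pmf (pmf_of_set (chain_edges d n))"
  let ?M2 = "density lborel (exponential_density ?c)"
  have c0: "?c > 0" using card_E_pos[OF jn] by simp
  interpret D: prob_space ?M2
    using c0 by (intro prob_space_exponential_density) auto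
  have I: "(\<integral>\<^sup>+y. ennreal y \<partial>?M2) = ennreal (1 / ?c)"
  proof -
    have "(\<integral>\<^sup>+y. ennreal y \<partial>?M2) = (\<integral>\<^sup>+y. ennreal (exponential_density ?c y) * ennreal y \<partial>lborel)"
      by (rule nn_integral_density) auto
    also have "\<dots> = (\<integral>\<^sup>+y. ennreal (erlang_density 0 ?c y * y ^ 1) \<partial>lborel)"
    proof (rule nn_integral_cong)
      fix y :: real
      show "ennreal (exponential_density ?c y) * ennreal y = ennreal (erlang_density 0 ?c y * y ^ 1)"
        using c0 by (cases "y < 0") (auto simp: exponential_density_def ennreal_mult[symmetric] ennreal_neg)
    qed
    also have "\<dots> = ennreal (1 / ?c)"
      using c0 by (subst nn_integral_erlang_ith_moment) (auto simp: divide_ennreal[symmetric])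
    finally show ?thesis .
  qed
  have "(\<integral>\<^sup>+t. ennreal (max 0 (snd t)) \<partial>BM d n) = (\<integral>\<^sup>+x. (\<integral>\<^sup>+y. ennreal (max 0 (snd (x, y))) \<partial>?M2) \<partial>?M1)"
    unfolding BM_def by (rule D.nn_integral_fst[symmetric]) measurable
  also have "\<dots> = ennreal (1 / ?c)"
    by (simp add: I measure_pmf.emeasure_space_1)
  finally show ?thesis .
qed

lemma late:
  assumes jn: "j < n" and M: "M > 0"
  shows "emeasure (stream_space (BM d n)) {\<omega> \<in> space (stream_space (BM d n)). M \<le> jump_time \<omega> K}
     \<le> ennreal (real K / (real (card (chain_edges d n)) * M))"
proof -
  let ?S = "stream_space (BM d n)"
  let ?c = "real (card (chain_edges d n))"
  have c0: "?c > 0" using card_E_pos[OF jn] by simp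
  define u where "u (\<omega> :: ((vtx \<times> vtx) \<times> real) stream) = ennreal (\<Sum>i<K. max 0 (snd (\<omega> !! i)))" for \<omega>
  have [measurable]: "u \<in> borel_measurable ?S" unfolding u_def by measurable
  have "{\<omega> \<in> space ?S. M \<le> jump_time \<omega> K} \<subseteq> {\<omega> \<in> space ?S. 1 \<le> ennreal (1 / M) * u \<omega>}"
  proof safe
    fix \<omega> assume "M \<le> jump_time \<omega> K"
    moreover have "jump_time \<omega> K \<le> (\<Sum>i<K. max 0 (snd (\<omega> !! i)))"
      unfolding jump_time_def by (rule sum_mono) simp
    ultimately have s: "M \<le> (\<Sum>i<K. max 0 (snd (\<omega> !! i)))" by linarith
    then have "1 \<le> (\<Sum>i<K. max 0 (snd (\<omega> !! i))) / M" using M by simp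
    moreover have "ennreal (1 / M) * u \<omega> = ennreal ((\<Sum>i<K. max 0 (snd (\<omega> !! i))) / M)"
      unfolding u_def using M by (simp add: ennreal_mult[symmetric] sum_nonneg)
    ultimately show "1 \<le> ennreal (1 / M) * u \<omega>" by (simp add: ennreal_leI)
  qed
  then have "emeasure ?S {\<omega> \<in> space ?S. M \<le> jump_time \<omega> K} \<le> emeasure ?S {\<omega> \<in> space ?S. 1 \<le> ennreal (1 / M) * u \<omega>}"
    by (intro emeasure_mono) measurable
  also have "\<dots> \<le> ennreal (1 / M) * (\<integral>\<^sup>+ \<omega>. u \<omega> * indicator (space ?S) \<omega> \<partial>?S)"
    by (rule nn_integral_Markov_inequality) measurable
  also have "(\<integral>\<^sup>+ \<omega>. u \<omega> * indicator (space ?S) \<omega> \<partial>?S) = (\<integral>\<^sup>+ \<omega>. (\<Sum>i<K. ennreal (max 0 (snd (\<omega> !! i)))) \<partial>?S)"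
  proof (rule nn_integral_cong)
    fix \<omega> assume "\<omega> \<in> space ?S"
    then show "u \<omega> * indicator (space ?S) \<omega> = (\<Sum>i<K. ennreal (max 0 (snd (\<omega> !! i))))"
      by (subst sum_ennreal) (auto simp: u_def simp del: ennreal_max_0)
  qed
  also have "\<dots> = (\<Sum>i<K. \<integral>\<^sup>+ \<omega>. ennreal (max 0 (snd (\<omega> !! i))) \<partial>?S)"
    by (rule nn_integral_sum) measurable
  also have "\<dots> = (\<Sum>i<K. ennreal (1 / ?c))"
    using nn_snth[OF jn, of "\<lambda>t. ennreal (max 0 (snd t))"] exp_mean[OF jn] by simp
  also have "ennreal (1 / M) * \<dots> = ennreal (real K / (?c * M))"
    using M c0 by (simp add: ennreal_mult[symmetric] ennreal_of_nat_eq_real_of_nat)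
  finally show ?thesis by simp
qed



lemma N_D_x0:
  assumes d: "15 < d"
    and C: "\<forall>k. 3 \<le> k \<and> k \<le> d - 3 \<longrightarrow> x0 (Leaf j k) = Cp"
    and D: "\<forall>k. d - 3 < k \<and> k \<le> d \<longrightarrow> x0 (Leaf j k) = Df"
  shows "N_D d j x0 = 3"
proof -
  have "{k. 3 \<le> k \<and> k \<le> d \<and> x0 (Leaf j k) = Df} = {d - 2..d}"
  proof (rule set_eqI)
    fix k
    show "k \<in> {k. 3 \<le> k \<and> k \<le> d \<and> x0 (Leaf j k) = Df} \<longleftrightarrow> k \<in> {d - 2..d}"
    proof (cases "k \<le> d - 3")
      case True
      then show ?thesis using C d by (cases "3 \<le> k") auto
    next
      case False
      then show ?thesis using D d by auto
    qed
  qed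
  then show ?thesis using d by (simp add: N_D_def)
qed

theorem mainTheorem4:
  fixes M' :: "nat \<Rightarrow> real"
  assumes "filterlim (\<lambda>d. M' d / (real d)^2) at_top sequentially"
  shows "\<exists>d0. \<forall>d\<ge>d0. \<forall>n j (x0 :: vtx \<Rightarrow> act).
           15 < d \<longrightarrow> j < n \<longrightarrow>
           (\<forall>k. 3 \<le> k \<and> k \<le> d - 3 \<longrightarrow> x0 (Leaf j k) = Cp) \<longrightarrow>
           (\<forall>k. d - 3 < k \<and> k \<le> d \<longrightarrow> x0 (Leaf j k) = Df) \<longrightarrow>
           measure (ipd_space d n)
             {\<omega> \<in> space (ipd_space d n).
                hit_time d j x0 (nat \<lceil>real d / 3 - 2\<rceil>) \<omega>
                  \<ge> min (hit_time d j x0 2 \<omega>) (ereal (M' d))}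
           \<le> 2 / 3"
proof -
  have "eventually (\<lambda>d. 48 \<le> M' d / (real d)^2) sequentially"
    using assms unfolding filterlim_at_top by blast
  then obtain d1 where d1: "\<And>d. d \<ge> d1 \<Longrightarrow> 48 \<le> M' d / (real d)^2"
    unfolding eventually_sequentially by blast
  show ?thesis
  proof (intro exI[of _ "max d1 16"] allI impI)
    fix d n j and x0 :: "vtx \<Rightarrow> act"
    assume dd: "max d1 16 \<le> d" and d15: "15 < d" and jn: "j < n"
      and C: "\<forall>k. 3 \<le> k \<and> k \<le> d - 3 \<longrightarrow> x0 (Leaf j k) = Cp"
      and D: "\<forall>k. d - 3 < k \<and> k \<le> d \<longrightarrow> x0 (Leaf j k) = Df"
    define G where "G = nat \<lceil>real d / 3 - 2\<rceil>"
    define c where "c = real (card (chain_edges d n))"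
    define K where "K = 4 * card (chain_edges d n) * d"
    let ?S = "stream_space (BM d n)"
    interpret P: prob_space "BM d n" using prob_BM[OF jn] .
    interpret S: prob_space ?S by (rule P.prob_space_stream_space)
    have c1: "c \<ge> 1" using card_E_pos[OF jn, of d] by (simp add: c_def Suc_le_eq)
    have dpos: "real d > 0" using d15 by simp
    have M48: "M' d \<ge> 48 * real d"
    proof -
      have "48 \<le> M' d / (real d)^2" using d1 dd by simp
      then have "48 * (real d)^2 \<le> M' d" using dpos by (simp add: field_simps)
      moreover have "real d \<le> (real d)^2" using d15 by (simp add: power2_eq_square)
      ultimately show ?thesis by linarith
    qed
    have Mpos: "M' d > 0" using M48 dpos by linarith
    have G4: "4 \<le> G" and G3: "3 * G + 3 \<le> d"
    proof -
      define y where "y = real d / 3 - 2"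
      have y0: "y \<ge> 10/3" using d15 by (simp add: y_def)
      have cc: "of_int \<lceil>y\<rceil> - 1 < y" "y \<le> of_int \<lceil>y\<rceil>" using ceiling_correct[of y] by auto
      have rG: "real G = of_int \<lceil>y\<rceil>" using cc y0 by (simp add: G_def y_def[symmetric])
      have "real G > 3" using rG cc y0 by linarith
      then show "4 \<le> G" by simp
      have "3 * real G + 3 < real d" using rG cc by (simp add: y_def)
      then show "3 * G + 3 \<le> d" by linarith
    qed
    have N0: "N_D d j x0 = 3" by (rule N_D_x0[OF d15 C D])
    define Succ where "Succ = {\<omega> \<in> space ?S. succ d j G K x0 \<omega>}"
    define L where "L = {\<omega> \<in> space ?S. M' d \<le> jump_time \<omega> K}"
    define NP where "NP = {\<omega> \<in> space ?S. \<not> (\<forall>i. 0 < snd (\<omega> !! i))}"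
    have Succ_sets: "Succ \<in> sets ?S" unfolding Succ_def by (rule succ_set)
    have L_sets: "L \<in> sets ?S" unfolding L_def jump_time_def by measurable
    have NP_sets: "NP \<in> sets ?S" unfolding NP_def by measurable
    have FF_ge: "FF d j G c K x0 \<ge> 5/12"
    proof -
      have U: "UU d j G x0 \<le> real G" using N0 by (simp add: UU_def rt_def)
      have U0: "UU d j G x0 \<ge> 0" using N0 G4 by (simp add: UU_def rt_def)
      have "c * UU d j G x0 \<le> c * real G" using U c1 by simp
      also have "\<dots> * 12 \<le> real (Suc K)"
      proof -
        have "12 * real G \<le> 4 * real d" using G3 by linarith
        then have "c * real G * 12 \<le> 4 * c * real d" using c1 by (simp add: algebra_simps)
        also have "\<dots> \<le> real (Suc K)" by (simp add: K_def c_def)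
        finally show ?thesis .
      qed
      finally have "c * UU d j G x0 * 12 \<le> real (Suc K)" using c1 by (smt (verit) mult_right_mono)
      then have "c * UU d j G x0 / real (Suc K) \<le> 1/12" by (simp add: divide_le_eq)
      then show ?thesis unfolding FF_def N0 hh3 by linarith
    qed
    have "ennreal (FF d j G c K x0) \<le> emeasure ?S Succ"
      unfolding Succ_def c_def by (rule DP[OF jn G3]) (use G4 N0 in linarith)
    with ennreal_leI[OF FF_ge] have "ennreal (5/12) \<le> emeasure ?S Succ" by (rule order.trans)
    then have PSucc: "measure ?S Succ \<ge> 5/12"
      unfolding S.emeasure_eq_measure using ennreal_le_iff measure_nonneg by blast
    have e: "emeasure ?S L \<le> ennreal (real K / (c * M' d))"
      unfolding L_def c_def by (rule late[OF jn Mpos])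
    have r1: "real K / (c * M' d) = 4 * real d / M' d"
      using c1 by (simp add: K_def c_def)
    have r2: "4 * real d / M' d \<le> 1/12" using M48 Mpos by (simp add: divide_le_eq)
    have "emeasure ?S L \<le> ennreal (1/12)"
      using e ennreal_leI[OF r2[folded r1]] by (rule order.trans)
    then have PL: "measure ?S L \<le> 1/12"
      unfolding S.emeasure_eq_measure by (subst (asm) ennreal_le_iff) auto
    have "emeasure ?S NP = 0"
      using AE_pos[OF jn, of d] NP_sets by (subst (asm) AE_iff_measurable[OF NP_sets]) (auto simp: NP_def)
    then have PNP: "measure ?S NP = 0" by (simp add: measure_def)
    have sub: "{\<omega> \<in> space ?S. hit_time d j x0 G \<omega> \<ge> min (hit_time d j x0 2 \<omega>) (ereal (M' d))}
        \<subseteq> ((space ?S - Succ) \<union> NP) \<union> L"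
    proof (rule subsetI, rule ccontr)
      fix \<omega> assume w: "\<omega> \<in> {\<omega> \<in> space ?S. hit_time d j x0 G \<omega> \<ge> min (hit_time d j x0 2 \<omega>) (ereal (M' d))}"
        and nw: "\<omega> \<notin> ((space ?S - Succ) \<union> NP) \<union> L"
      then have s: "succ d j G K x0 \<omega>" and pos: "\<forall>i. 0 < snd (\<omega> !! i)" and T: "jump_time \<omega> K < M' d"
        by (auto simp: Succ_def NP_def L_def)
      obtain i where i: "i \<le> K" "N_D d j (conf x0 \<omega> i) = G" "\<forall>l\<le>i. N_D d j (conf x0 \<omega> l) \<noteq> 2"
        using succ_conf[of G d j K x0 \<omega>] s G4 by auto
      show False using not_bad[OF pos i T] w by simp
    qed
    have "measure ?S {\<omega> \<in> space ?S. hit_time d j x0 G \<omega> \<ge> min (hit_time d j x0 2 \<omega>) (ereal (M' d))}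
        \<le> measure ?S (((space ?S - Succ) \<union> NP) \<union> L)"
      by (rule S.finite_measure_mono[OF sub]) (use Succ_sets NP_sets L_sets in auto)
    also have "\<dots> \<le> measure ?S ((space ?S - Succ) \<union> NP) + measure ?S L"
      by (rule measure_subadditive) (use Succ_sets NP_sets L_sets in auto)
    also have "measure ?S ((space ?S - Succ) \<union> NP) \<le> measure ?S (space ?S - Succ) + measure ?S NP"
      by (rule measure_subadditive) (use Succ_sets NP_sets in auto)
    also have "measure ?S (space ?S - Succ) = 1 - measure ?S Succ"
      by (rule S.prob_compl[OF Succ_sets])
    finally have "measure ?S {\<omega> \<in> space ?S. hit_time d j x0 G \<omega> \<ge> min (hit_time d j x0 2 \<omega>) (ereal (M' d))} \<le> 2/3"
      using PSucc PL PNP by linarith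
    then show "measure (ipd_space d n)
             {\<omega> \<in> space (ipd_space d n).
                hit_time d j x0 (nat \<lceil>real d / 3 - 2\<rceil>) \<omega>
                  \<ge> min (hit_time d j x0 2 \<omega>) (ereal (M' d))}
           \<le> 2 / 3"
      unfolding ipd_space_BM G_def .
  qed
qed

end
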